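(* Let $n>1$, $j_0,\dots,j_{n-1}\in\mathbb Z/(n)$ with $j_i=j_{-i}$ for all $i$, and let $B=B_{j_0,\dots,j_{n-1}}$, $X$ and $r_{j_0,\dots,j_{n-1}}$ be as in the context. Then $(X,r_{j_0,\dots,j_{n-1}})$ is a solution of the YBE, and: (a) it is indecomposable if and only if the additive subgroup of $\mathbb Z/(n)$ generated by $j_0,\dots,j_{n-1}$ is $\mathbb Z/(n)$; (b) it is irretractable if and only if the $n$ rows of the matrix $(j_{l-k})_{k,l\in\mathbb Z/(n)}$ are pairwise distinct, i.e. if $i,i'\in\mathbb Z/(n)$ satisfy $j_{i+k}=j_{i'+k}$ for every $k$, then $i=i'$.
   Context: Let $n>1$ and let $e_i$ ($i\in\mathbb Z/(n)$) be the standard basis of the free $\mathbb Z/(n)$-module $(\mathbb Z/(n))^n$, indices in $\mathbb Z/(n)$. Let $\alpha:\mathbb Z/(n)\to\mathrm{Aut}((\mathbb Z/(n))^n)$, $\alpha(i)(e_k)=e_{i+k}$. Given $j_0,\dots,j_{n-1}\in\mathbb Z/(n)$ with $j_i=j_{-i}$, let $b=b_{j_0,\dots,j_{n-1}}$ be the bilinear form on $(\mathbb Z/(n))^n$ with $b(e_k,e_l)=j_{l-k}$. $B_{j_0,\dots,j_{n-1}}$ is the set $(\mathbb Z/(n))^n\times\mathbb Z/(n)$ with multiplication $(u,i)\circ(v,j)=(u+\alpha(i)(v),i+j)$ and addition $(u,i)+(v,j)=(u+v,i+j+b(u,v))$; this is a left brace (a set with abelian group $+$ and group $\circ$ satisfying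 $a\circ(b+c)+a=a\circ b+a\circ c$), with lambda map $\lambda_{(u,i)}(v,j)=-(u,i)+(u,i)\circ(v,j)=(\alpha(i)(v),\ j-b(u,\alpha(i)(v)))$. Let $x_{ij}=(e_i,j)$ and $X=\{x_{ij}: i,j\in\mathbb Z/(n)\}$; then $\lambda_{x_{ij}}(x_{kl})=x_{k+j,\ l-j_{k+j-i}}$. Define $r_{j_0,\dots,j_{n-1}}:X\times X\to X\times X$ by $r(x,y)=(\lambda_x(y),\lambda^{-1}_{\lambda_x(y)}(x))$. A solution of the YBE is a pair $(X,r)$, $r(x,y)=(\sigma_x(y),\gamma_y(x))$, with $r^2=\mathrm{id}$, all $\sigma_x,\gamma_x$ bijective, and $r_{12}r_{23}r_{12}=r_{23}r_{12}r_{23}$; indecomposable means $\langle\sigma_x\rangle\le\mathrm{Sym}_X$ is transitive; irretractable means $\sigma_x\ne\sigma_y$ for $x\ne y$. *)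

theory Defs
  imports Main
begin

text \<open>Z/(n) is represented by the integers 0..n-1, all arithmetic
reduced with mod n. A vector of (Z/(n))^n is a function int => int with values in
0..n-1 on indices 0..n-1 and 0 outside. The parameters j_0..j_{n-1} are a function
jj :: int => int, always accessed as jj (k mod n).\<close>

definition zn :: "int \<Rightarrow> int set" where
  "zn n = {0..<n}"

definition vecs :: "int \<Rightarrow> (int \<Rightarrow> int) set" where
  "vecs n = {u. (\<forall>k\<in>zn n. u k \<in> zn n) \<and> (\<forall>k. k \<notin> zn n \<longrightarrow> u k = 0)}"

definition Bset :: "int \<Rightarrow> ((int \<Rightarrow> int) \<times> int) set" where
  "Bset n = vecs n \<times> zn n"

definition evec :: "int \<Rightarrow> int \<Rightarrow> (int \<Rightarrow> int)" where
  "evec n i = (\<lambda>k. if k = i mod n then 1 else 0)"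

text \<open>alpha(i)(v), so that alpha(i)(e_k) = e_(i+k)\<close>
definition alpha :: "int \<Rightarrow> int \<Rightarrow> (int \<Rightarrow> int) \<Rightarrow> (int \<Rightarrow> int)" where
  "alpha n i v = (\<lambda>m. if m \<in> zn n then v ((m - i) mod n) else 0)"

definition bform :: "int \<Rightarrow> (int \<Rightarrow> int) \<Rightarrow> (int \<Rightarrow> int) \<Rightarrow> (int \<Rightarrow> int) \<Rightarrow> int" where
  "bform n jj u v = (\<Sum>k\<in>zn n. \<Sum>l\<in>zn n. u k * v l * jj ((l - k) mod n)) mod n"

definition blam :: "int \<Rightarrow> (int \<Rightarrow> int) \<Rightarrow> ((int \<Rightarrow> int) \<times> int) \<Rightarrow> ((int \<Rightarrow> int) \<times> int) \<Rightarrow> ((int \<Rightarrow> int) \<times> int)" where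
  "blam n jj a c = (case a of (u, i) \<Rightarrow> case c of (v, j) \<Rightarrow>
      (alpha n i v, (j - bform n jj u (alpha n i v)) mod n))"

definition blam_inv :: "int \<Rightarrow> (int \<Rightarrow> int) \<Rightarrow> ((int \<Rightarrow> int) \<times> int) \<Rightarrow> ((int \<Rightarrow> int) \<times> int) \<Rightarrow> ((int \<Rightarrow> int) \<times> int)" where
  "blam_inv n jj a = the_inv_into (Bset n) (blam n jj a)"

definition xel :: "int \<Rightarrow> int \<Rightarrow> int \<Rightarrow> ((int \<Rightarrow> int) \<times> int)" where
  "xel n i j = (evec n i, j mod n)"

definition Xset :: "int \<Rightarrow> ((int \<Rightarrow> int) \<times> int) set" where
  "Xset n = {xel n i j | i j. i \<in> zn n \<and> j \<in> zn n}"

definition rmap :: "int \<Rightarrow> (int \<Rightarrow> int) \<Rightarrow> ((int \<Rightarrow> int) \<times> int) \<times> ((int \<Rightarrow> int) \<times> int)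
    \<Rightarrow> ((int \<Rightarrow> int) \<times> int) \<times> ((int \<Rightarrow> int) \<times> int)" where
  "rmap n jj p = (case p of (x, y) \<Rightarrow>
      (blam n jj x y, blam_inv n jj (blam n jj x y) x))"

definition sig :: "('a \<times> 'a \<Rightarrow> 'a \<times> 'a) \<Rightarrow> 'a \<Rightarrow> 'a \<Rightarrow> 'a" where
  "sig r x y = fst (r (x, y))"

definition gam :: "('a \<times> 'a \<Rightarrow> 'a \<times> 'a) \<Rightarrow> 'a \<Rightarrow> 'a \<Rightarrow> 'a" where
  "gam r y x = snd (r (x, y))"

definition r12 :: "('a \<times> 'a \<Rightarrow> 'a \<times> 'a) \<Rightarrow> 'a \<times> 'a \<times> 'a \<Rightarrow> 'a \<times> 'a \<times> 'a" where
  "r12 r t = (case t of (x, y, z) \<Rightarrow> (case r (x, y) of (a, b) \<Rightarrow> (a, b, z)))"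

definition r23 :: "('a \<times> 'a \<Rightarrow> 'a \<times> 'a) \<Rightarrow> 'a \<times> 'a \<times> 'a \<Rightarrow> 'a \<times> 'a \<times> 'a" where
  "r23 r t = (case t of (x, y, z) \<Rightarrow> (case r (y, z) of (b, c) \<Rightarrow> (x, b, c)))"

definition ybe_solution :: "'a set \<Rightarrow> ('a \<times> 'a \<Rightarrow> 'a \<times> 'a) \<Rightarrow> bool" where
  "ybe_solution X r \<longleftrightarrow>
     (\<forall>p \<in> X \<times> X. r p \<in> X \<times> X) \<and>
     (\<forall>p \<in> X \<times> X. r (r p) = p) \<and>
     (\<forall>x \<in> X. bij_betw (sig r x) X X) \<and>
     (\<forall>x \<in> X. bij_betw (gam r x) X X) \<and>
     (\<forall>t \<in> X \<times> X \<times> X. r12 r (r23 r (r12 r t)) = r23 r (r12 r (r23 r t)))"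

inductive_set sig_group :: "'a set \<Rightarrow> ('a \<times> 'a \<Rightarrow> 'a \<times> 'a) \<Rightarrow> ('a \<Rightarrow> 'a) set"
  for X r where
  sg_id: "id \<in> sig_group X r"
| sg_gen: "x \<in> X \<Longrightarrow> g \<in> sig_group X r \<Longrightarrow> (sig r x \<circ> g) \<in> sig_group X r"
| sg_inv: "x \<in> X \<Longrightarrow> g \<in> sig_group X r \<Longrightarrow> (inv_into X (sig r x) \<circ> g) \<in> sig_group X r"

definition indecomposable :: "'a set \<Rightarrow> ('a \<times> 'a \<Rightarrow> 'a \<times> 'a) \<Rightarrow> bool" where
  "indecomposable X r \<longleftrightarrow> (\<forall>x\<in>X. \<forall>y\<in>X. \<exists>g\<in>sig_group X r. g x = y)"

definition irretractable :: "'a set \<Rightarrow> ('a \<times> 'a \<Rightarrow> 'a \<times> 'a) \<Rightarrow> bool" where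
  "irretractable X r \<longleftrightarrow>
     (\<forall>x\<in>X. \<forall>y\<in>X. x \<noteq> y \<longrightarrow> (\<exists>z\<in>X. sig r x z \<noteq> sig r y z))"

definition gen_subgroup :: "int \<Rightarrow> (int \<Rightarrow> int) \<Rightarrow> int set" where
  "gen_subgroup n jj = {(\<Sum>i\<in>zn n. c i * jj i) mod n | c. True}"

end

theory Submission imports Defs begin

definition JJ :: "int \<Rightarrow> (int \<Rightarrow> int) \<Rightarrow> int \<Rightarrow> int" where
  "JJ n jj t = jj (t mod n)"

definition RR :: "(int \<Rightarrow> int) \<Rightarrow> (int\<times>int)\<times>(int\<times>int) \<Rightarrow> (int\<times>int)\<times>(int\<times>int)" where
 "RR J p = (case p of ((i,j),(k,l)) \<Rightarrow> ((k+j, l - J(k+j-i)), (i - l + J(k+j-i), j + J(k+j-i))))"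

lemma RR_braid:
  assumes ev: "\<And>t. J (-t) = J t"
  shows "r12 (RR J) (r23 (RR J) (r12 (RR J) t)) = r23 (RR J) (r12 (RR J) (r23 (RR J) t))"
proof -
  obtain a b c where t: "t = (a,b,c)" by (metis prod.collapse)
  show ?thesis unfolding t using ev
    apply (cases a; cases b; cases c)
    apply (simp add: RR_def r12_def r23_def algebra_simps)
    done
qed

lemma RR_invol:
  assumes ev: "\<And>t. J (-t) = J t"
  shows "RR J (RR J p) = p"
proof -
  obtain i j k l where p: "p = ((i,j),(k,l))" by (metis prod.collapse)
  have "J (i - k - j) = J (k+j-i)" using ev[of "k+j-i"] by (simp add: algebra_simps)
  then show ?thesis unfolding p RR_def by (simp add: algebra_simps)
qed

lemma sg_comp: "g \<in> sig_group X r \<Longrightarrow> h \<in> sig_group X r \<Longrightarrow> g \<circ> h \<in> sig_group X r"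
proof (induction g rule: sig_group.induct)
  case sg_id then show ?case by simp
next
  case (sg_gen x g)
  then have "sig r x \<circ> (g \<circ> h) \<in> sig_group X r" by (intro sig_group.sg_gen)
  then show ?case by (metis comp_assoc)
next
  case (sg_inv x g)
  then have "inv_into X (sig r x) \<circ> (g \<circ> h) \<in> sig_group X r" by (intro sig_group.sg_inv)
  then show ?case by (metis comp_assoc)
qed

context
  fixes n :: int and jj :: "int \<Rightarrow> int"
  assumes n1: "n > 1"
    and rng: "\<forall>i\<in>zn n. jj i \<in> zn n"
    and sym: "\<forall>i\<in>zn n. jj i = jj ((- i) mod n)"
begin

lemma n0: "n > 0" using n1 by simp

lemma mod_zn: "a mod n \<in> zn n" using n0 by (simp add: zn_def)

lemma JJ_ev: "JJ n jj (-t) = JJ n jj t"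
proof -
  have "t mod n \<in> zn n" by (rule mod_zn)
  then have "jj (t mod n) = jj ((- (t mod n)) mod n)" using sym by blast
  also have "(- (t mod n)) mod n = (-t) mod n" by (metis mod_minus_eq)
  finally show ?thesis unfolding JJ_def by simp
qed

lemma JJ_rng: "JJ n jj t \<in> zn n" unfolding JJ_def using rng mod_zn by blast

lemma JJ_cong: "n dvd a - b \<Longrightarrow> JJ n jj a = JJ n jj b"
  unfolding JJ_def by (metis mod_eq_dvd_iff)

lemma JJ_mod: "JJ n jj (a mod n) = JJ n jj a"
  unfolding JJ_def by simp

lemma evec_eq: "evec n i = evec n i' \<longleftrightarrow> n dvd i - i'"
proof
  assume "evec n i = evec n i'"
  then have "evec n i (i mod n) = evec n i' (i mod n)" by simp
  then have "i mod n = i' mod n" unfolding evec_def by (auto split: if_splits)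
  then show "n dvd i - i'" by (simp add: mod_eq_dvd_iff)
next
  assume "n dvd i - i'"
  then have "i mod n = i' mod n" by (simp add: mod_eq_dvd_iff)
  then show "evec n i = evec n i'" unfolding evec_def by simp
qed

lemma xel_eq: "xel n i j = xel n i' j' \<longleftrightarrow> n dvd i - i' \<and> n dvd j - j'"
  unfolding xel_def by (simp add: evec_eq mod_eq_dvd_iff)

lemma xel_in: "xel n i j \<in> Xset n"
proof -
  have "xel n i j = xel n (i mod n) (j mod n)"
    by (simp add: xel_eq mod_eq_dvd_iff[symmetric])
  then show ?thesis unfolding Xset_def using mod_zn by blast
qed

lemma Xset_E: "x \<in> Xset n \<Longrightarrow> (\<And>i j. x = xel n i j \<Longrightarrow> P) \<Longrightarrow> P"
  unfolding Xset_def by blast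

lemma evec_vecs: "evec n i \<in> vecs n"
  using n1 mod_zn[of i] unfolding vecs_def evec_def zn_def by auto

lemma xel_Bset: "xel n i j \<in> Bset n"
  unfolding xel_def Bset_def using evec_vecs mod_zn by auto

lemma alpha_evec: "alpha n (j mod n) (evec n k) = evec n (k+j)"
proof
  fix m
  show "alpha n (j mod n) (evec n k) m = evec n (k+j) m"
  proof (cases "m \<in> zn n")
    case True
    then have mm: "m mod n = m" using n0 by (simp add: zn_def)
    have e1: "(m - j mod n) mod n = (m - j) mod n" by (simp add: mod_diff_right_eq)
    have "((m - j) mod n = k mod n) \<longleftrightarrow> (m mod n = (k+j) mod n)"
      unfolding mod_eq_dvd_iff by (simp add: algebra_simps)
    then have "((m - j mod n) mod n = k mod n) \<longleftrightarrow> (m = (k+j) mod n)" using e1 mm by simp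
    then show ?thesis using True unfolding alpha_def evec_def by simp
  next
    case False
    then have "m \<noteq> (k+j) mod n" using mod_zn by blast
    then show ?thesis using False unfolding alpha_def evec_def by simp
  qed
qed

lemma bform_evec: "bform n jj (evec n i) (evec n K) = JJ n jj (K - i)"
proof -
  have "(\<Sum>k\<in>zn n. \<Sum>l\<in>zn n. evec n i k * evec n K l * jj ((l - k) mod n))
      = (\<Sum>k\<in>zn n. if k = i mod n then (\<Sum>l\<in>zn n. if l = K mod n then jj ((l - k) mod n) else 0) else 0)"
    unfolding evec_def by (intro sum.cong refl) (auto intro: sum.cong)
  also have "\<dots> = jj ((K mod n - i mod n) mod n)"
    using mod_zn[of i] mod_zn[of K] by (simp add: sum.delta zn_def)
  also have "\<dots> = JJ n jj (K - i)" unfolding JJ_def by (simp add: mod_diff_eq)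
  finally show ?thesis unfolding bform_def using JJ_rng[of "K-i"] n0 by (simp add: zn_def)
qed

lemma blam_xel: "blam n jj (xel n i j) (xel n k l) = xel n (k+j) (l - JJ n jj (k+j-i))"
  unfolding blam_def xel_def by (simp add: alpha_evec bform_evec mod_diff_left_eq)

lemma alpha_inj: "v \<in> vecs n \<Longrightarrow> v' \<in> vecs n \<Longrightarrow> alpha n i v = alpha n i v' \<Longrightarrow> v = v'"
proof
  fix m0
  assume v: "v \<in> vecs n" and v': "v' \<in> vecs n" and e: "alpha n i v = alpha n i v'"
  show "v m0 = v' m0"
  proof (cases "m0 \<in> zn n")
    case True
    define m where "m = (m0 + i) mod n"
    have mz: "m \<in> zn n" unfolding m_def by (rule mod_zn)
    have "(m - i) mod n = m0" using True n0 unfolding m_def zn_def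
      by (simp add: mod_diff_left_eq)
    then show ?thesis using fun_cong[OF e, of m] mz unfolding alpha_def by simp
  next
    case False
    then show ?thesis using v v' unfolding vecs_def by simp
  qed
qed

lemma blam_inj: "inj_on (blam n jj a) (Bset n)"
proof (rule inj_onI)
  fix x y assume x: "x \<in> Bset n" and y: "y \<in> Bset n" and e: "blam n jj a x = blam n jj a y"
  obtain u i where a: "a = (u,i)" by (metis prod.collapse)
  obtain v j where xx: "x = (v,j)" by (metis prod.collapse)
  obtain v' j' where yy: "y = (v',j')" by (metis prod.collapse)
  have al: "alpha n i v = alpha n i v'" using e unfolding a xx yy blam_def by simp
  have vv: "v = v'" using alpha_inj[OF _ _ al] x y unfolding xx yy Bset_def by simp
  have "(j - bform n jj u (alpha n i v)) mod n = (j' - bform n jj u (alpha n i v)) mod n"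
    using e unfolding a xx yy blam_def vv by simp
  then have "j mod n = j' mod n" by (simp add: mod_eq_dvd_iff)
  then have "j = j'" using x y unfolding xx yy Bset_def zn_def by simp
  then show "x = y" using xx yy vv by simp
qed

lemma blam_inv_xel: "blam_inv n jj (xel n p q) (xel n i j) = xel n (i - q) (j + JJ n jj (i - p))"
  unfolding blam_inv_def
  by (rule the_inv_into_f_eq[OF blam_inj]) (simp_all add: blam_xel xel_Bset)

lemma rmap_xel: "rmap n jj (xel n i j, xel n k l) =
   (xel n (k+j) (l - JJ n jj (k+j-i)), xel n (i - l + JJ n jj (k+j-i)) (j + JJ n jj (k+j-i)))"
proof -
  have "JJ n jj (i - (k+j)) = JJ n jj (k+j-i)" using JJ_ev[of "k+j-i"] by simp
  then show ?thesis unfolding rmap_def by (simp add: blam_xel blam_inv_xel algebra_simps)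
qed

definition PP :: "int \<times> int \<Rightarrow> (int \<Rightarrow> int) \<times> int" where
  "PP p = xel n (fst p) (snd p)"

lemma rmap_PP: "rmap n jj (PP a, PP b) = map_prod PP PP (RR (JJ n jj) (a,b))"
  unfolding PP_def RR_def by (cases a; cases b) (simp add: rmap_xel)

lemma r12_PP: "r12 (rmap n jj) (map_prod PP (map_prod PP PP) u) = map_prod PP (map_prod PP PP) (r12 (RR (JJ n jj)) u)"
proof -
  obtain a b c where u: "u = (a,b,c)" by (metis prod.collapse)
  obtain a' b' where e: "RR (JJ n jj) (a,b) = (a',b')" by (metis surj_pair)
  then show ?thesis unfolding r12_def u by (simp add: rmap_PP)
qed
lemma r23_PP: "r23 (rmap n jj) (map_prod PP (map_prod PP PP) u) = map_prod PP (map_prod PP PP) (r23 (RR (JJ n jj)) u)"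
proof -
  obtain a b c where u: "u = (a,b,c)" by (metis prod.collapse)
  obtain b' c' where e: "RR (JJ n jj) (b,c) = (b',c')" by (metis surj_pair)
  then show ?thesis unfolding r23_def u by (simp add: rmap_PP)
qed

lemma Xset_PP: "x \<in> Xset n \<Longrightarrow> (\<And>a. x = PP a \<Longrightarrow> P) \<Longrightarrow> P"
proof -
  assume x: "x \<in> Xset n" and h: "\<And>a. x = PP a \<Longrightarrow> P"
  obtain i j where "x = xel n i j" using x by (rule Xset_E)
  then have "x = PP (i,j)" unfolding PP_def by simp
  then show P by (rule h)
qed

lemma PP_in: "PP a \<in> Xset n" unfolding PP_def by (rule xel_in)

lemma sig_xel: "sig (rmap n jj) (xel n i j) (xel n k l) = xel n (k+j) (l - JJ n jj (k+j-i))"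
  unfolding sig_def by (simp add: rmap_xel)

lemma gam_xel: "gam (rmap n jj) (xel n k l) (xel n i j) = xel n (i - l + JJ n jj (k+j-i)) (j + JJ n jj (k+j-i))"
  unfolding gam_def by (simp add: rmap_xel)

lemma sig_inj: "inj_on (sig (rmap n jj) (xel n i j)) (Xset n)"
proof (rule inj_onI)
  fix x y assume x: "x \<in> Xset n" and y: "y \<in> Xset n"
    and e: "sig (rmap n jj) (xel n i j) x = sig (rmap n jj) (xel n i j) y"
  obtain k l where xx: "x = xel n k l" using x by (rule Xset_E)
  obtain k' l' where yy: "y = xel n k' l'" using y by (rule Xset_E)
  have d1: "n dvd (k + j) - (k' + j)" and d2: "n dvd (l - JJ n jj (k+j-i)) - (l' - JJ n jj (k'+j-i))"
    using e unfolding xx yy sig_xel xel_eq by auto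
  have "n dvd k - k'" using d1 by simp
  moreover have "JJ n jj (k+j-i) = JJ n jj (k'+j-i)" using d1 by (intro JJ_cong) (simp add: algebra_simps)
  ultimately show "x = y" using d2 unfolding xx yy xel_eq by simp
qed

lemma sig_bij: "bij_betw (sig (rmap n jj) (xel n i j)) (Xset n) (Xset n)"
proof (rule bij_betw_imageI[OF sig_inj])
  show "sig (rmap n jj) (xel n i j) ` Xset n = Xset n"
  proof
    show "sig (rmap n jj) (xel n i j) ` Xset n \<subseteq> Xset n"
      by (auto elim!: Xset_E simp: sig_xel xel_in)
    show "Xset n \<subseteq> sig (rmap n jj) (xel n i j) ` Xset n"
    proof
      fix y assume "y \<in> Xset n"
      then obtain a b where yy: "y = xel n a b" by (rule Xset_E)
      have "y = sig (rmap n jj) (xel n i j) (xel n (a - j) (b + JJ n jj (a - i)))"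
        unfolding yy sig_xel by simp
      then show "y \<in> sig (rmap n jj) (xel n i j) ` Xset n" using xel_in by blast
    qed
  qed
qed

lemma gam_inj: "inj_on (gam (rmap n jj) (xel n k l)) (Xset n)"
proof (rule inj_onI)
  fix x y assume x: "x \<in> Xset n" and y: "y \<in> Xset n"
    and e: "gam (rmap n jj) (xel n k l) x = gam (rmap n jj) (xel n k l) y"
  obtain i j where xx: "x = xel n i j" using x by (rule Xset_E)
  obtain i' j' where yy: "y = xel n i' j'" using y by (rule Xset_E)
  define t where "t = JJ n jj (k+j-i)"
  define t' where "t' = JJ n jj (k+j'-i')"
  have d1: "n dvd (i - l + t) - (i' - l + t')" and d2: "n dvd (j + t) - (j' + t')"
    using e unfolding xx yy gam_xel xel_eq t_def t'_def by auto
  have "n dvd ((j + t) - (j' + t')) - ((i - l + t) - (i' - l + t'))"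
    using d1 d2 by (rule dvd_diff[rotated])
  then have "n dvd (k+j-i) - (k+j'-i')" by (simp add: algebra_simps)
  then have "t = t'" unfolding t_def t'_def by (rule JJ_cong)
  then show "x = y" using d1 d2 unfolding xx yy xel_eq by simp
qed

lemma gam_bij: "bij_betw (gam (rmap n jj) (xel n k l)) (Xset n) (Xset n)"
proof (rule bij_betw_imageI[OF gam_inj])
  show "gam (rmap n jj) (xel n k l) ` Xset n = Xset n"
  proof
    show "gam (rmap n jj) (xel n k l) ` Xset n \<subseteq> Xset n"
      by (auto elim!: Xset_E simp: gam_xel xel_in)
    show "Xset n \<subseteq> gam (rmap n jj) (xel n k l) ` Xset n"
    proof
      fix y assume "y \<in> Xset n"
      then obtain a b where yy: "y = xel n a b" by (rule Xset_E)
      define s where "s = JJ n jj (k + b - a - l)"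
      have e: "k + (b - s) - (a + l - s) = k + b - a - l" by simp
      have "y = gam (rmap n jj) (xel n k l) (xel n (a + l - s) (b - s))"
        unfolding yy gam_xel e s_def[symmetric] by simp
      then show "y \<in> gam (rmap n jj) (xel n k l) ` Xset n" using xel_in by blast
    qed
  qed
qed

lemma ybe: "ybe_solution (Xset n) (rmap n jj)"
  unfolding ybe_solution_def
proof (intro conjI ballI)
  fix p assume "p \<in> Xset n \<times> Xset n"
  then obtain a b where p: "p = (PP a, PP b)" by (auto elim!: Xset_PP)
  show "rmap n jj p \<in> Xset n \<times> Xset n"
    unfolding p rmap_PP by (cases "RR (JJ n jj) (a, b)") (simp add: PP_in)
  obtain a' b' where e: "RR (JJ n jj) (a,b) = (a',b')" by (metis surj_pair)
  have "RR (JJ n jj) (a',b') = (a,b)" using RR_invol[of "JJ n jj" "(a,b)"] JJ_ev e by simp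
  then show "rmap n jj (rmap n jj p) = p" unfolding p rmap_PP e by (simp add: rmap_PP)
next
  fix x assume "x \<in> Xset n"
  then show "bij_betw (sig (rmap n jj) x) (Xset n) (Xset n)" by (auto elim!: Xset_E intro: sig_bij)
next
  fix x assume "x \<in> Xset n"
  then show "bij_betw (gam (rmap n jj) x) (Xset n) (Xset n)" by (auto elim!: Xset_E intro: gam_bij)
next
  fix t assume "t \<in> Xset n \<times> Xset n \<times> Xset n"
  then obtain a b c where t: "t = map_prod PP (map_prod PP PP) (a,b,c)" by (auto elim!: Xset_PP)
  show "r12 (rmap n jj) (r23 (rmap n jj) (r12 (rmap n jj) t)) = r23 (rmap n jj) (r12 (rmap n jj) (r23 (rmap n jj) t))"
    unfolding t r12_PP r23_PP using RR_braid[of "JJ n jj"] JJ_ev by simp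
qed

lemma inv_sig_xel: "inv_into (Xset n) (sig (rmap n jj) (xel n i j)) (xel n a b) = xel n (a - j) (b + JJ n jj (a - i))"
  by (rule inv_into_f_eq[OF sig_inj xel_in]) (simp add: sig_xel)

lemma shift_mult: "\<exists>g\<in>sig_group (Xset n) (rmap n jj). g (xel n k l) = xel n k (l + c * JJ n jj m)"
proof (induction c rule: int_induct[where k=0])
  case base
  show ?case by (rule bexI[of _ id]) (auto intro: sig_group.sg_id)
next
  case (step1 c)
  then obtain g where g: "g \<in> sig_group (Xset n) (rmap n jj)" and ge: "g (xel n k l) = xel n k (l + c * JJ n jj m)" by blast
  let ?s = "inv_into (Xset n) (sig (rmap n jj) (xel n (k - m) 0))"
  have "?s \<circ> g \<in> sig_group (Xset n) (rmap n jj)" using g xel_in by (rule sig_group.sg_inv[rotated])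
  moreover have "(?s \<circ> g) (xel n k l) = xel n k (l + (c+1) * JJ n jj m)"
    using ge by (simp add: inv_sig_xel algebra_simps)
  ultimately show ?case by blast
next
  case (step2 c)
  then obtain g where g: "g \<in> sig_group (Xset n) (rmap n jj)" and ge: "g (xel n k l) = xel n k (l + c * JJ n jj m)" by blast
  let ?s = "sig (rmap n jj) (xel n (k - m) 0)"
  have "?s \<circ> g \<in> sig_group (Xset n) (rmap n jj)" using g xel_in by (rule sig_group.sg_gen[rotated])
  moreover have "(?s \<circ> g) (xel n k l) = xel n k (l + (c-1) * JJ n jj m)"
    using ge by (simp add: sig_xel algebra_simps)
  ultimately show ?case by blast
qed

lemma shift_sum: "finite S \<Longrightarrow> \<exists>g\<in>sig_group (Xset n) (rmap n jj). g (xel n k l) = xel n k (l + (\<Sum>i\<in>S. c i * JJ n jj i))"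
proof (induction S arbitrary: l rule: finite_induct)
  case empty
  show ?case by (rule bexI[of _ id]) (auto intro: sig_group.sg_id)
next
  case (insert a S)
  obtain g1 where g1: "g1 \<in> sig_group (Xset n) (rmap n jj)" and e1: "g1 (xel n k l) = xel n k (l + (\<Sum>i\<in>S. c i * JJ n jj i))"
    using insert.IH by blast
  obtain g2 where g2: "g2 \<in> sig_group (Xset n) (rmap n jj)"
    and e2: "g2 (xel n k (l + (\<Sum>i\<in>S. c i * JJ n jj i))) = xel n k (l + (\<Sum>i\<in>S. c i * JJ n jj i) + c a * JJ n jj a)"
    using shift_mult by blast
  have "g2 \<circ> g1 \<in> sig_group (Xset n) (rmap n jj)" using g2 g1 by (rule sg_comp)
  moreover have "(g2 \<circ> g1) (xel n k l) = xel n k (l + (\<Sum>i\<in>insert a S. c i * JJ n jj i))"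
    using e1 e2 insert.hyps by (simp add: algebra_simps)
  ultimately show ?case by blast
qed

lemma finite_zn: "finite (zn n)" by (simp add: zn_def)

lemma indec_if: "gen_subgroup n jj = zn n \<Longrightarrow> indecomposable (Xset n) (rmap n jj)"
  unfolding indecomposable_def
proof (intro ballI)
  assume gs: "gen_subgroup n jj = zn n"
  fix x y assume x: "x \<in> Xset n" and y: "y \<in> Xset n"
  obtain k l where xx: "x = xel n k l" using x by (rule Xset_E)
  obtain k' l' where yy: "y = xel n k' l'" using y by (rule Xset_E)
  have "(l' - l + JJ n jj k') mod n \<in> gen_subgroup n jj" using gs mod_zn by simp
  then obtain c where ce: "(l' - l + JJ n jj k') mod n = (\<Sum>i\<in>zn n. c i * jj i) mod n"
    unfolding gen_subgroup_def by blast
  have sj: "(\<Sum>i\<in>zn n. c i * JJ n jj i) = (\<Sum>i\<in>zn n. c i * jj i)"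
    by (rule sum.cong) (auto simp: JJ_def zn_def)
  let ?g1 = "sig (rmap n jj) (xel n 0 (k' - k)) \<circ> id"
  have g1: "?g1 \<in> sig_group (Xset n) (rmap n jj)" by (rule sig_group.sg_gen[OF xel_in sig_group.sg_id])
  have e1: "?g1 (xel n k l) = xel n k' (l - JJ n jj k')" by (simp add: sig_xel)
  obtain g2 where g2: "g2 \<in> sig_group (Xset n) (rmap n jj)"
    and e2: "g2 (xel n k' (l - JJ n jj k')) = xel n k' (l - JJ n jj k' + (\<Sum>i\<in>zn n. c i * JJ n jj i))"
    using shift_sum[OF finite_zn] by blast
  have "g2 \<circ> ?g1 \<in> sig_group (Xset n) (rmap n jj)" using g2 g1 by (rule sg_comp)
  moreover have "(g2 \<circ> ?g1) x = y"
  proof -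
    have "n dvd (\<Sum>i\<in>zn n. c i * jj i) - (l' - l + JJ n jj k')" using ce[symmetric] by (simp only: mod_eq_dvd_iff)
    then have "n dvd (l - JJ n jj k' + (\<Sum>i\<in>zn n. c i * JJ n jj i)) - l'" unfolding sj
      by (simp add: algebra_simps)
    then show ?thesis unfolding xx yy using e1 e2 by (simp add: xel_eq)
  qed
  ultimately show "\<exists>g\<in>sig_group (Xset n) (rmap n jj). g x = y" by blast
qed

definition inH :: "int \<Rightarrow> bool" where
  "inH d \<longleftrightarrow> (\<exists>c. n dvd (\<Sum>i\<in>zn n. c i * jj i) - d)"

lemma inH_0: "inH 0"
  unfolding inH_def by (rule exI[of _ "\<lambda>_. 0"]) simp

lemma inH_cong: "inH d \<Longrightarrow> n dvd d - d' \<Longrightarrow> inH d'"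
proof -
  assume "inH d" and dd: "n dvd d - d'"
  then obtain c where c: "n dvd (\<Sum>i\<in>zn n. c i * jj i) - d" unfolding inH_def by blast
  have "n dvd ((\<Sum>i\<in>zn n. c i * jj i) - d) + (d - d')" using c dd by (rule dvd_add)
  then show ?thesis unfolding inH_def by auto
qed

lemma inH_plus: "inH d \<Longrightarrow> inH (d + e * JJ n jj m)"
proof -
  assume "inH d"
  then obtain c where c: "n dvd (\<Sum>i\<in>zn n. c i * jj i) - d" unfolding inH_def by blast
  define c' where "c' = (\<lambda>i. c i + (if i = m mod n then e else 0))"
  have pw: "\<And>i. c' i * jj i = c i * jj i + (if i = m mod n then e * jj i else 0)"
    unfolding c'_def by (simp add: distrib_right)
  have "(\<Sum>i\<in>zn n. c' i * jj i) = (\<Sum>i\<in>zn n. c i * jj i) + (\<Sum>i\<in>zn n. (if i = m mod n then e * jj i else 0))"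
    unfolding pw by (rule sum.distrib)
  also have "(\<Sum>i\<in>zn n. (if i = m mod n then e * jj i else 0)) = e * JJ n jj m"
    using mod_zn[of m] finite_zn by (simp add: sum.delta' JJ_def)
  finally have "(\<Sum>i\<in>zn n. c' i * jj i) - (d + e * JJ n jj m) = (\<Sum>i\<in>zn n. c i * jj i) - d" by simp
  then show ?thesis unfolding inH_def using c by metis
qed

lemma invariant: "g \<in> sig_group (Xset n) (rmap n jj) \<Longrightarrow> \<exists>k' l'. g (xel n k l) = xel n k' l' \<and> inH (l' - l)"
proof (induction g rule: sig_group.induct)
  case sg_id
  show ?case by (rule exI[of _ k], rule exI[of _ l]) (simp add: inH_0)
next
  case (sg_gen x g)
  obtain i j where xx: "x = xel n i j" using sg_gen.hyps(1) by (rule Xset_E)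
  obtain k' l' where e: "g (xel n k l) = xel n k' l'" and h: "inH (l' - l)" using sg_gen.IH by blast
  have "inH ((l' - l) + (-1) * JJ n jj (k'+j-i))" using h by (rule inH_plus)
  moreover have "(l' - l) + (-1) * JJ n jj (k'+j-i) = (l' - JJ n jj (k'+j-i)) - l" by simp
  ultimately have "inH ((l' - JJ n jj (k'+j-i)) - l)" by metis
  moreover have "(sig (rmap n jj) x \<circ> g) (xel n k l) = xel n (k'+j) (l' - JJ n jj (k'+j-i))"
    using e unfolding xx by (simp add: sig_xel)
  ultimately show ?case by blast
next
  case (sg_inv x g)
  obtain i j where xx: "x = xel n i j" using sg_inv.hyps(1) by (rule Xset_E)
  obtain k' l' where e: "g (xel n k l) = xel n k' l'" and h: "inH (l' - l)" using sg_inv.IH by blast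
  have "inH ((l' - l) + 1 * JJ n jj (k' - i))" using h by (rule inH_plus)
  moreover have "(l' - l) + 1 * JJ n jj (k' - i) = (l' + JJ n jj (k' - i)) - l" by simp
  ultimately have "inH ((l' + JJ n jj (k' - i)) - l)" by metis
  moreover have "(inv_into (Xset n) (sig (rmap n jj) x) \<circ> g) (xel n k l) = xel n (k' - j) (l' + JJ n jj (k' - i))"
    using e unfolding xx by (simp add: inv_sig_xel)
  ultimately show ?case by blast
qed

lemma indec_only: "indecomposable (Xset n) (rmap n jj) \<Longrightarrow> gen_subgroup n jj = zn n"
proof
  show "gen_subgroup n jj \<subseteq> zn n" unfolding gen_subgroup_def using mod_zn by auto
next
  assume ind: "indecomposable (Xset n) (rmap n jj)"
  show "zn n \<subseteq> gen_subgroup n jj"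
  proof
    fix d assume d: "d \<in> zn n"
    obtain g where g: "g \<in> sig_group (Xset n) (rmap n jj)" and ge: "g (xel n 0 0) = xel n 0 d"
      using ind xel_in unfolding indecomposable_def by blast
    obtain k' l' where e: "g (xel n 0 0) = xel n k' l'" and h: "inH (l' - 0)" using invariant[OF g] by blast
    have "n dvd d - l'" using e ge by (simp add: xel_eq)
    then have "n dvd l' - d" by (simp add: dvd_diff_commute)
    then have "inH d" using h inH_cong by simp
    then obtain c where "n dvd (\<Sum>i\<in>zn n. c i * jj i) - d" unfolding inH_def by blast
    then have "d = (\<Sum>i\<in>zn n. c i * jj i) mod n" using d n0
      by (simp add: mod_eq_dvd_iff[symmetric] zn_def)
    then show "d \<in> gen_subgroup n jj" unfolding gen_subgroup_def by blast
  qed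
qed

lemma zn_dvd_eq: "a \<in> zn n \<Longrightarrow> b \<in> zn n \<Longrightarrow> n dvd a - b \<Longrightarrow> a = b"
  unfolding zn_def by (simp add: mod_eq_dvd_iff[symmetric])

lemma Xset_E2: "x \<in> Xset n \<Longrightarrow> (\<And>i j. x = xel n i j \<Longrightarrow> i \<in> zn n \<Longrightarrow> j \<in> zn n \<Longrightarrow> P) \<Longrightarrow> P"
  unfolding Xset_def by blast

lemma irr_iff: "irretractable (Xset n) (rmap n jj) \<longleftrightarrow>
   (\<forall>i\<in>zn n. \<forall>i'\<in>zn n. (\<forall>k\<in>zn n. jj ((i + k) mod n) = jj ((i' + k) mod n)) \<longrightarrow> i = i')"
proof
  assume irr: "irretractable (Xset n) (rmap n jj)"
  show "\<forall>i\<in>zn n. \<forall>i'\<in>zn n. (\<forall>k\<in>zn n. jj ((i + k) mod n) = jj ((i' + k) mod n)) \<longrightarrow> i = i'"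
  proof (intro ballI impI)
    fix i i' assume i: "i \<in> zn n" and i': "i' \<in> zn n" and H: "\<forall>k\<in>zn n. jj ((i + k) mod n) = jj ((i' + k) mod n)"
    show "i = i'"
    proof (rule ccontr)
      assume ne: "i \<noteq> i'"
      have "xel n i 0 \<noteq> xel n i' 0" using zn_dvd_eq[OF i i'] ne by (auto simp: xel_eq)
      then obtain z where z: "z \<in> Xset n" and zne: "sig (rmap n jj) (xel n i 0) z \<noteq> sig (rmap n jj) (xel n i' 0) z"
        using irr xel_in unfolding irretractable_def by blast
      obtain k l where zz: "z = xel n k l" using z by (rule Xset_E)
      have dk: "n dvd (a + (-k) mod n) - (a - k)" for a
      proof -
        have "(a + (-k) mod n) mod n = (a - k) mod n" by (simp add: mod_add_right_eq)
        then show ?thesis by (simp add: mod_eq_dvd_iff)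
      qed
      have JJne: "JJ n jj (k - i) \<noteq> JJ n jj (k - i')" using zne unfolding zz sig_xel by auto
      have "JJ n jj (k - i) = JJ n jj (i + (-k) mod n)"
        using JJ_ev[of "k - i"] JJ_cong[OF dk[of i]] by simp
      also have "\<dots> = JJ n jj (i' + (-k) mod n)" using H mod_zn[of "-k"] unfolding JJ_def by blast
      also have "\<dots> = JJ n jj (k - i')"
        using JJ_ev[of "k - i'"] JJ_cong[OF dk[of i']] by simp
      finally show False using JJne by simp
    qed
  qed
next
  assume C: "\<forall>i\<in>zn n. \<forall>i'\<in>zn n. (\<forall>k\<in>zn n. jj ((i + k) mod n) = jj ((i' + k) mod n)) \<longrightarrow> i = i'"
  show "irretractable (Xset n) (rmap n jj)"
    unfolding irretractable_def
  proof (intro ballI impI)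
    fix x y assume x: "x \<in> Xset n" and y: "y \<in> Xset n" and ne: "x \<noteq> y"
    obtain i j where xx: "x = xel n i j" and i: "i \<in> zn n" and j: "j \<in> zn n" using x by (rule Xset_E2)
    obtain i' j' where yy: "y = xel n i' j'" and i': "i' \<in> zn n" and j': "j' \<in> zn n" using y by (rule Xset_E2)
    show "\<exists>z\<in>Xset n. sig (rmap n jj) x z \<noteq> sig (rmap n jj) y z"
    proof (rule ccontr)
      assume "\<not> ?thesis"
      then have A: "\<And>z. z \<in> Xset n \<Longrightarrow> sig (rmap n jj) x z = sig (rmap n jj) y z" by blast
      have "n dvd j - j'" using A[OF xel_in[of 0 0]] unfolding xx yy sig_xel by (simp add: xel_eq)
      then have jj': "j = j'" using zn_dvd_eq[OF j j'] by simp
      have Jk: "JJ n jj (k - i) = JJ n jj (k - i')" for k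
      proof -
        have "n dvd (0 - JJ n jj (k - i)) - (0 - JJ n jj (k - i'))"
          using A[OF xel_in[of "k - j" 0]] unfolding xx yy sig_xel jj' by (simp add: xel_eq)
        then have "n dvd JJ n jj (k - i') - JJ n jj (k - i)" by simp
        then show ?thesis using zn_dvd_eq[OF JJ_rng JJ_rng] by metis
      qed
      have "i = i'"
      proof (rule C[rule_format, OF i i'])
        fix k assume "k \<in> zn n"
        have e1: "JJ n jj (i + k) = JJ n jj (-k - i)" using JJ_ev[of "i+k"] by (metis minus_add_distrib diff_conv_add_uminus add.commute)
        have e2: "JJ n jj (i' + k) = JJ n jj (-k - i')" using JJ_ev[of "i'+k"] by (metis minus_add_distrib diff_conv_add_uminus add.commute)
        show "jj ((i + k) mod n) = jj ((i' + k) mod n)" using e1 e2 Jk[of "-k"] unfolding JJ_def by simp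
      qed
      then show False using ne jj' unfolding xx yy by simp
    qed
  qed
qed

end

theorem mainTheorem13:
  fixes n :: int and jj :: "int \<Rightarrow> int"
  assumes "n > 1"
    and "\<forall>i\<in>zn n. jj i \<in> zn n"
    and "\<forall>i\<in>zn n. jj i = jj ((- i) mod n)"
  shows "ybe_solution (Xset n) (rmap n jj)
    \<and> (indecomposable (Xset n) (rmap n jj) \<longleftrightarrow> gen_subgroup n jj = zn n)
    \<and> (irretractable (Xset n) (rmap n jj) \<longleftrightarrow>
         (\<forall>i\<in>zn n. \<forall>i'\<in>zn n.
            (\<forall>k\<in>zn n. jj ((i + k) mod n) = jj ((i' + k) mod n)) \<longrightarrow> i = i'))"
  using ybe[OF assms] indec_if[OF assms] indec_only[OF assms] irr_iff[OF assms] by blast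

end
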